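(* Suppose the jobs of an instance of $Pm||\sum w_jU_j$ are indexed so that $d_1\le d_2\le\dots\le d_n$, and consider a feasible solution in the discarding formulation: a set $S\subseteq J$ of scheduled jobs with a proper schedule $\sigma$ of $S$ in which every scheduled job $j$ satisfies $C_j(\sigma)\le d_j$, the cost being $\sum_{j\in J\setminus S}w_j$. Let $\sigma'$ be the intermediate schedule obtained from $\sigma$ by an admissible swap at some step $j^*\in S$ between machines $M_h$ and $M_i$. Then $\sigma'$ schedules the same set $S$ with every scheduled job completing by its due date; in particular $\sum w_jU_j(\sigma')\le\sum w_jU_j(\sigma)$.
   Context: Jobs $J=\{1,\dots,n\}$, job $j$ with positive integer processing time $p_j$, nonnegative integer weight $w_j$ and integer due date $d_j$; $m$ identical machines $M_1,\dots,M_m$; $p_{\max}=\max_{j\in J} p_j$, $P(X)=\sum_{j\in X}p_j$. In the discarding formulation of $Pm||\sum w_jU_j$, tardy jobs are discarded and incur penalty $w_j$: a solution schedules a subset $S$ of jobs, each completing by its due date, and $\sum w_jU_j$ equals the total weight of discarded jobs. A proper schedule $\sigma$ of $S$ is a partition $S=S_1(\sigma)\cup\dots\cup S_m(\sigma)$, the jobs of $S_i(\sigma)$ processed on $M_i$ consecutively from time $0$ without idle time in increasing index order; $C_j(\sigma)$ is the completion time of $j$. For $j\in S$ let $J_{i,j}(\sigma)=\{k\in S_i(\sigma):k\le j\}$ and $\Delta_{h,i,j}(\sigma)=P(J_{h,j}(\sigma))-P(J_{i,j}(\sigma))$. The swap: admissible for $\sigma$ at step $j^*$ with machines $M_h,M_i$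 if $j^*\in S_h(\sigma)$, $|S_i(\sigma)\setminus J_{i,j^*}(\sigma)|\ge 2p_{\max}$, and $\Delta_{h,i,j^*}(\sigma)\ge 4p_{\max}^2$. Let $J_I$ be the first (smallest-index) $2p_{\max}$ jobs of $S_i(\sigma)\setminus J_{i,j^*}(\sigma)$ and $J_H$ the last (largest-index) $2p_{\max}$ jobs of $J_{h,j^*}(\sigma)$; choose non-empty $J_{H'}\subseteq J_H$, $J_{I'}\subseteq J_I$ with $P(J_{H'})=P(J_{I'})$. The intermediate schedule $\sigma'$: on $M_h$ the time interval occupied by $J_H$ in $\sigma$ is filled by $J_H\setminus J_{H'}$ then $J_{I'}$; on $M_i$ the interval occupied by $J_I$ is filled by $J_{H'}$ then $J_I\setminus J_{I'}$ (each group in its order in $\sigma$); all other jobs keep their positions; no discarded job is scheduled. *)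

theory Defs
  imports Main
begin

text \<open>Jobs are natural numbers; machines are indexed 0,...,m-1 (M_1..M_m in the paper).
A (general) schedule assigns to every machine index the list of jobs processed on it,
consecutively from time 0 without idle time, in list order.\<close>

type_synonym schedule = "nat \<Rightarrow> nat list"

definition PP :: "(nat \<Rightarrow> nat) \<Rightarrow> nat set \<Rightarrow> nat" where
  "PP p X = (\<Sum>j\<in>X. p j)"

definition ctime :: "(nat \<Rightarrow> nat) \<Rightarrow> nat list \<Rightarrow> nat \<Rightarrow> nat" where
  "ctime p xs k = sum_list (map p (take (Suc k) xs))"

definition schedules :: "nat \<Rightarrow> schedule \<Rightarrow> nat set \<Rightarrow> bool" where
  "schedules m \<sigma> S \<longleftrightarrow> distinct (concat (map \<sigma> [0..<m])) \<and> set (concat (map \<sigma> [0..<m])) = S"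

definition proper :: "nat \<Rightarrow> schedule \<Rightarrow> nat set \<Rightarrow> bool" where
  "proper m \<sigma> S \<longleftrightarrow> schedules m \<sigma> S \<and> (\<forall>i<m. sorted_wrt (<) (\<sigma> i))"

definition on_time :: "nat \<Rightarrow> (nat \<Rightarrow> nat) \<Rightarrow> (nat \<Rightarrow> int) \<Rightarrow> schedule \<Rightarrow> bool" where
  "on_time m p d \<sigma> \<longleftrightarrow>
     (\<forall>i<m. \<forall>k<length (\<sigma> i). int (ctime p (\<sigma> i) k) \<le> d (\<sigma> i ! k))"

definition Jset :: "schedule \<Rightarrow> nat \<Rightarrow> nat \<Rightarrow> nat set" where
  "Jset \<sigma> i j = {k \<in> set (\<sigma> i). k \<le> j}"

definition Delta :: "(nat \<Rightarrow> nat) \<Rightarrow> schedule \<Rightarrow> nat \<Rightarrow> nat \<Rightarrow> nat \<Rightarrow> int" where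
  "Delta p \<sigma> h i j = int (PP p (Jset \<sigma> h j)) - int (PP p (Jset \<sigma> i j))"

definition admissible ::
  "nat \<Rightarrow> (nat \<Rightarrow> nat) \<Rightarrow> nat \<Rightarrow> schedule \<Rightarrow> nat \<Rightarrow> nat \<Rightarrow> nat \<Rightarrow> bool" where
  "admissible m p pmax \<sigma> js h i \<longleftrightarrow> h < m \<and> i < m \<and> js \<in> set (\<sigma> h) \<and>
     card (set (\<sigma> i) - Jset \<sigma> i js) \<ge> 2 * pmax \<and>
     Delta p \<sigma> h i js \<ge> 4 * int pmax ^ 2"

definition JI_list :: "nat \<Rightarrow> schedule \<Rightarrow> nat \<Rightarrow> nat \<Rightarrow> nat list" where
  "JI_list pmax \<sigma> js i = take (2 * pmax) (filter (\<lambda>k. js < k) (\<sigma> i))"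

definition JH_list :: "nat \<Rightarrow> schedule \<Rightarrow> nat \<Rightarrow> nat \<Rightarrow> nat list" where
  "JH_list pmax \<sigma> js h =
     (let L = filter (\<lambda>k. k \<le> js) (\<sigma> h) in drop (length L - 2 * pmax) L)"

text \<open>The intermediate schedule sigma' (defined for a proper sigma, where the machine
lists are sorted, so that J_H is a contiguous block ending at js on M_h and J_I the
contiguous block directly after J_{i,js} on M_i).\<close>
definition swap_sched ::
  "nat \<Rightarrow> schedule \<Rightarrow> nat \<Rightarrow> nat \<Rightarrow> nat \<Rightarrow> nat set \<Rightarrow> nat set \<Rightarrow> schedule" where
  "swap_sched pmax \<sigma> js h i H' I' = (\<lambda>g.
     (let JH = JH_list pmax \<sigma> js h; JI = JI_list pmax \<sigma> js i;
          Lh = filter (\<lambda>k. k \<le> js) (\<sigma> h); Rh = filter (\<lambda>k. js < k) (\<sigma> h);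
          Li = filter (\<lambda>k. k \<le> js) (\<sigma> i); Ri = filter (\<lambda>k. js < k) (\<sigma> i)
      in if g = h then
           take (length Lh - 2 * pmax) Lh @ filter (\<lambda>k. k \<notin> H') JH
             @ filter (\<lambda>k. k \<in> I') JI @ Rh
         else if g = i then
           Li @ filter (\<lambda>k. k \<in> H') JH @ filter (\<lambda>k. k \<notin> I') JI
             @ drop (2 * pmax) Ri
         else \<sigma> g))"

definition cost :: "nat \<Rightarrow> nat \<Rightarrow> (nat \<Rightarrow> nat) \<Rightarrow> schedule \<Rightarrow> nat" where
  "cost n m w \<sigma> = (\<Sum>j\<in>{1..n} - set (concat (map \<sigma> [0..<m])). w j)"

end

theory Submission
  imports Defs "HOL-Library.Multiset"
begin
definition okoff :: "(nat \<Rightarrow> nat) \<Rightarrow> (nat \<Rightarrow> int) \<Rightarrow> nat \<Rightarrow> nat list \<Rightarrow> bool" where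
  "okoff p d c xs \<longleftrightarrow> (\<forall>k<length xs. int (c + ctime p xs k) \<le> d (xs ! k))"

lemma okoff_Nil[simp]: "okoff p d c []"
  by (simp add: okoff_def)

lemma ctime_Cons0[simp]: "ctime p (x # xs) 0 = p x"
  by (simp add: ctime_def)

lemma ctime_ConsSuc[simp]: "ctime p (x # xs) (Suc k) = p x + ctime p xs k"
  by (simp add: ctime_def)

lemma okoff_Cons[simp]:
  "okoff p d c (x # xs) \<longleftrightarrow> int (c + p x) \<le> d x \<and> okoff p d (c + p x) xs"
  unfolding okoff_def
  by (auto simp: less_Suc_eq_0_disj add.assoc)

lemma okoff_append:
  "okoff p d c (xs @ ys) \<longleftrightarrow> okoff p d c xs \<and> okoff p d (c + sum_list (map p xs)) ys"
  by (induction xs arbitrary: c) (auto simp: add.assoc)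

lemma okoff_mono: "okoff p d c xs \<Longrightarrow> c' \<le> c \<Longrightarrow> okoff p d c' xs"
  unfolding okoff_def by force

lemma okoff_filter: "okoff p d c xs \<Longrightarrow> okoff p d c (filter P xs)"
proof (induction xs arbitrary: c)
  case (Cons x xs)
  then show ?case using okoff_mono[of p d "c + p x" xs c] by auto
qed simp

lemma okoff_bound:
  "(\<And>x. x \<in> set xs \<Longrightarrow> int (c + sum_list (map p xs)) \<le> d x) \<Longrightarrow> okoff p d c xs"
proof (induction xs arbitrary: c)
  case (Cons x xs)
  have "okoff p d (c + p x) xs"
    using Cons.prems by (intro Cons.IH) (auto simp: add.assoc)
  moreover have "int (c + p x) \<le> d x" using Cons.prems[of x] by auto
  ultimately show ?case by simp
qed simp

lemma okoff_last: "okoff p d c xs \<Longrightarrow> xs \<noteq> [] \<Longrightarrow> int (c + sum_list (map p xs)) \<le> d (last xs)"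
proof (induction xs arbitrary: c)
  case (Cons x xs)
  show ?case
  proof (cases "xs = []")
    case True then show ?thesis using Cons by simp
  next
    case False
    then have "int (c + p x + sum_list (map p xs)) \<le> d (last xs)"
      using Cons.IH[of "c + p x"] Cons.prems by simp
    then show ?thesis using False by (simp add: add.assoc)
  qed
qed simp

lemma okoff_mem: "okoff p d c xs \<Longrightarrow> x \<in> set xs \<Longrightarrow> int c \<le> d x"
proof (induction xs arbitrary: c)
  case (Cons y xs)
  then show ?case using okoff_mono[of p d "c + p y" xs c] by auto
qed simp

lemma sum_filter_split:
  fixes p :: "'a \<Rightarrow> nat"
  shows "sum_list (map p (filter P xs)) + sum_list (map p (filter (\<lambda>x. \<not> P x) xs)) = sum_list (map p xs)"
  by (induction xs) (auto simp: ac_simps)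

lemma sum_list_le_len: "(\<And>x. x \<in> set xs \<Longrightarrow> p x \<le> b) \<Longrightarrow> sum_list (map p xs) \<le> length xs * b"
  by (induction xs) force+

lemma sum_filter_set: "distinct xs \<Longrightarrow> H \<subseteq> set xs \<Longrightarrow> sum_list (map p (filter (\<lambda>k. k \<in> H) xs)) = PP p H"
proof -
  assume a: "distinct xs" "H \<subseteq> set xs"
  have "sum_list (map p (filter (\<lambda>k. k \<in> H) xs)) = sum p (set (filter (\<lambda>k. k \<in> H) xs))"
    using a by (simp add: sum_list_distinct_conv_sum_set)
  also have "set (filter (\<lambda>k. k \<in> H) xs) = H" using a by auto
  finally show ?thesis by (simp add: PP_def)
qed

lemma sorted_split: "sorted_wrt (<) xs \<Longrightarrow> filter (\<lambda>k. k \<le> (js::nat)) xs @ filter (\<lambda>k. js < k) xs = xs"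
proof (induction xs)
  case (Cons x xs)
  show ?case
  proof (cases "x \<le> js")
    case True then show ?thesis using Cons by auto
  next
    case False
    then have "\<forall>y\<in>set xs. js < y" using Cons.prems by auto
    then have "filter (\<lambda>k. k \<le> js) xs = []" "filter (\<lambda>k. js < k) xs = xs" by (auto simp: filter_empty_conv)
    then show ?thesis using False by auto
  qed
qed simp

lemma sorted_last: "sorted_wrt (<) xs \<Longrightarrow> (js::nat) \<in> set xs \<Longrightarrow> \<forall>y\<in>set xs. y \<le> js \<Longrightarrow> last xs = js"
proof (induction xs)
  case (Cons x xs)
  show ?case
  proof (cases "xs = []")
    case True then show ?thesis using Cons by auto
  next
    case False
    have "js \<in> set xs"
    proof (rule ccontr)
      assume "js \<notin> set xs"
      then have "x = js" using Cons.prems by auto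
      moreover obtain y where "y \<in> set xs" using False by fastforce
      ultimately show False using Cons.prems by force
    qed
    then show ?thesis using Cons False by auto
  qed
qed simp

lemma mset_concat_map: "mset (concat (map f xs)) = sum_list (map (\<lambda>g. mset (f g)) xs)"
  by (induction xs) auto

lemma sum_two_changed:
  fixes F G :: "nat \<Rightarrow> 'a::comm_monoid_add"
  assumes "finite A" "h \<in> A" "i \<in> A" "h \<noteq> i" "\<And>g. g \<in> A \<Longrightarrow> g \<noteq> h \<Longrightarrow> g \<noteq> i \<Longrightarrow> F g = G g"
    "F h + F i = G h + G i"
  shows "sum F A = sum G A"
proof -
  have r: "sum K A = K h + K i + sum K (A - {h} - {i})" for K :: "nat \<Rightarrow> 'a"
  proof -
    have "sum K A = K h + sum K (A - {h})" using assms by (simp add: sum.remove)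
    also have "sum K (A - {h}) = K i + sum K (A - {h} - {i})"
      using assms by (intro sum.remove) auto
    finally show ?thesis by (simp add: add.assoc)
  qed
  have "sum F A = F h + F i + sum F (A - {h} - {i})" by (rule r)
  moreover have "sum G A = G h + G i + sum G (A - {h} - {i})" by (rule r)
  moreover have "sum F (A - {h} - {i}) = sum G (A - {h} - {i})"
    using assms by (intro sum.cong) auto
  ultimately show ?thesis using assms by simp
qed


lemma on_time_okoff: "on_time m p d \<sigma> \<longleftrightarrow> (\<forall>g<m. okoff p d 0 (\<sigma> g))"
  by (simp add: on_time_def okoff_def)

lemma main:
  fixes pm :: nat and \<sigma> :: schedule
  assumes proper: "proper m \<sigma> S"
    and feasible: "on_time m p d \<sigma>"
    and hm: "h < m" and im: "i < m" and hi: "h \<noteq> i"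
    and jsh: "js \<in> set (\<sigma> h)"
    and Del: "Delta p \<sigma> h i js \<ge> 4 * int pm ^ 2"
    and H'_sub: "H' \<subseteq> set (JH_list pm \<sigma> js h)"
    and I'_sub: "I' \<subseteq> set (JI_list pm \<sigma> js i)"
    and PP_eq: "PP p H' = PP p I'"
    and pbound: "\<forall>x\<in>S. p x \<le> pm"
    and dsort: "\<forall>x\<in>S. \<forall>y\<in>S. x \<le> y \<longrightarrow> d x \<le> d y"
  shows "schedules m (swap_sched pm \<sigma> js h i H' I') S \<and> on_time m p d (swap_sched pm \<sigma> js h i H' I')"
proof -
  define \<sigma>' where "\<sigma>' = swap_sched pm \<sigma> js h i H' I'"
  define Lh where "Lh = filter (\<lambda>k. k \<le> js) (\<sigma> h)"
  define Rh where "Rh = filter (\<lambda>k. js < k) (\<sigma> h)"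
  define Li where "Li = filter (\<lambda>k. k \<le> js) (\<sigma> i)"
  define Ri where "Ri = filter (\<lambda>k. js < k) (\<sigma> i)"
  define A where "A = take (length Lh - 2 * pm) Lh"
  define JH where "JH = drop (length Lh - 2 * pm) Lh"
  define JI where "JI = take (2 * pm) Ri"
  define B where "B = drop (2 * pm) Ri"
  define s where "s = (\<lambda>xs. sum_list (map p xs))"
  have dc: "distinct (concat (map \<sigma> [0..<m]))" and sc: "set (concat (map \<sigma> [0..<m])) = S"
    and srt: "\<And>g. g < m \<Longrightarrow> sorted_wrt (<) (\<sigma> g)"
    using proper by (auto simp: proper_def schedules_def)
  have dist: "distinct (\<sigma> g)" if "g < m" for g
    using dc that by (auto simp: distinct_concat_iff)
  have inS: "set (\<sigma> g) \<subseteq> S" if "g < m" for g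
    using sc that by auto
  have ok: "okoff p d 0 (\<sigma> g)" if "g < m" for g
    using feasible that by (simp add: on_time_okoff)
  have JH_eq: "JH_list pm \<sigma> js h = JH" by (simp add: JH_list_def JH_def Lh_def Let_def)
  have JI_eq: "JI_list pm \<sigma> js i = JI" by (simp add: JI_list_def JI_def Ri_def)
  have sh: "\<sigma> h = A @ JH @ Rh"
    using sorted_split[OF srt[OF hm], of js] unfolding A_def JH_def Lh_def Rh_def
    by (metis append.assoc append_take_drop_id)
  have si: "\<sigma> i = Li @ JI @ B"
    using sorted_split[OF srt[OF im], of js] unfolding JI_def B_def Li_def Ri_def
    by (metis append_take_drop_id)
  have s'h: "\<sigma>' h = A @ filter (\<lambda>k. k \<notin> H') JH @ filter (\<lambda>k. k \<in> I') JI @ Rh"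
    by (simp add: \<sigma>'_def swap_sched_def Let_def A_def JH_def JI_def Lh_def Rh_def Ri_def
        JH_list_def JI_list_def)
  have s'i: "\<sigma>' i = Li @ filter (\<lambda>k. k \<in> H') JH @ filter (\<lambda>k. k \<notin> I') JI @ B"
    using hi by (simp add: \<sigma>'_def swap_sched_def Let_def B_def JH_def JI_def Lh_def Li_def Ri_def
        JH_list_def JI_list_def)
  have s'g: "\<sigma>' g = \<sigma> g" if "g \<noteq> h" "g \<noteq> i" for g
    using that by (simp add: \<sigma>'_def swap_sched_def Let_def)
  have msum: "mset (\<sigma>' h) + mset (\<sigma>' i) = mset (\<sigma> h) + mset (\<sigma> i)"
  proof -
    have 1: "mset (filter (\<lambda>k. k \<notin> H') JH) + mset (filter (\<lambda>k. k \<in> H') JH) = mset JH"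
      by (metis mset_filter multiset_partition add.commute)
    have 2: "mset (filter (\<lambda>k. k \<in> I') JI) + mset (filter (\<lambda>k. k \<notin> I') JI) = mset JI"
      by (metis mset_filter multiset_partition)
    show ?thesis unfolding s'h s'i sh si mset_append 1[symmetric] 2[symmetric]
      by (simp only: ac_simps)
  qed
  have mcon: "mset (concat (map \<sigma>' [0..<m])) = mset (concat (map \<sigma> [0..<m]))"
  proof -
    have "mset (concat (map \<sigma>' [0..<m])) = (\<Sum>g\<in>{0..<m}. mset (\<sigma>' g))"
      by (simp add: mset_concat_map sum_list_distinct_conv_sum_set)
    also have "\<dots> = (\<Sum>g\<in>{0..<m}. mset (\<sigma> g))"
      using hm im hi msum s'g by (intro sum_two_changed) auto
    also have "\<dots> = mset (concat (map \<sigma> [0..<m]))"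
      by (simp add: mset_concat_map sum_list_distinct_conv_sum_set)
    finally show ?thesis .
  qed
  have sched: "schedules m \<sigma>' S"
    unfolding schedules_def using mcon dc sc
    by (metis mset_eq_imp_distinct_iff mset_eq_setD)
  have Lh_AJH: "Lh = A @ JH" by (simp add: A_def JH_def)
  have Ri_JIB: "Ri = JI @ B" by (simp add: JI_def B_def)
  have setLh: "Jset \<sigma> h js = set Lh" by (auto simp: Jset_def Lh_def)
  have setLi: "Jset \<sigma> i js = set Li" by (auto simp: Jset_def Li_def)
  have PLh: "PP p (Jset \<sigma> h js) = s Lh"
    using dist[OF hm] by (simp add: setLh PP_def s_def Lh_def sum_list_distinct_conv_sum_set)
  have PLi: "PP p (Jset \<sigma> i js) = s Li"
    using dist[OF im] by (simp add: setLi PP_def s_def Li_def sum_list_distinct_conv_sum_set)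
  define M where "M = pm * pm"
  have Del2: "int (s Lh) \<ge> int (s Li) + 4 * int M"
    using Del PLh PLi by (simp add: Delta_def power2_eq_square M_def)
  have sLh: "s Lh = s A + s JH" by (simp add: Lh_AJH s_def)
  have setJH: "set JH \<subseteq> S" using inS[OF hm] sh by auto
  have setJI: "set JI \<subseteq> S" using inS[OF im] si by auto
  have lenJH: "length JH \<le> 2 * pm" by (simp add: JH_def)
  have lenJI: "length JI \<le> 2 * pm" by (simp add: JI_def)
  have sJH: "s JH \<le> 2 * M"
  proof -
    have "s JH \<le> length JH * pm" unfolding s_def using setJH pbound by (intro sum_list_le_len) auto
    also have "\<dots> \<le> 2 * M" using lenJH by (simp add: M_def)
    finally show ?thesis .
  qed
  have sJI: "s JI \<le> 2 * M"
  proof -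
    have "s JI \<le> length JI * pm" unfolding s_def using setJI pbound by (intro sum_list_le_len) auto
    also have "\<dots> \<le> 2 * M" using lenJI by (simp add: M_def)
    finally show ?thesis .
  qed
  have distJH: "distinct JH" using dist[OF hm] sh by simp
  have distJI: "distinct JI" using dist[OF im] si by simp
  have PH: "s (filter (\<lambda>k. k \<in> H') JH) = PP p H'"
    unfolding s_def using distJH H'_sub JH_eq by (intro sum_filter_set) auto
  have PI: "s (filter (\<lambda>k. k \<in> I') JI) = PP p I'"
    unfolding s_def using distJI I'_sub JI_eq by (intro sum_filter_set) auto
  have splH: "s (filter (\<lambda>k. k \<in> H') JH) + s (filter (\<lambda>k. k \<notin> H') JH) = s JH"
    unfolding s_def by (rule sum_filter_split)
  have splI: "s (filter (\<lambda>k. k \<in> I') JI) + s (filter (\<lambda>k. k \<notin> I') JI) = s JI"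
    unfolding s_def by (rule sum_filter_split)
  have jsS: "js \<in> S" using jsh inS[OF hm] by auto
  have okLh: "okoff p d 0 Lh"
    using ok[OF hm] sorted_split[OF srt[OF hm], of js] okoff_append
    unfolding Lh_def Rh_def by metis
  have lastLh: "last Lh = js"
    using srt[OF hm] jsh unfolding Lh_def by (intro sorted_last) (auto simp: sorted_wrt_filter)
  have Lhne: "Lh \<noteq> []" using jsh by (auto simp: Lh_def filter_empty_conv)
  have djs: "int (s Lh) \<le> d js"
    using okoff_last[OF okLh Lhne] lastLh by (simp add: s_def)
  have dJI: "d js \<le> d x" if "x \<in> set JI" for x
  proof -
    have "x \<in> set Ri" using that Ri_JIB by (metis in_set_takeD JI_def)
    then have "js < x" by (simp add: Ri_def)
    moreover have "x \<in> S" using that setJI by auto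
    ultimately show ?thesis using dsort jsS by auto
  qed
  have okh: "okoff p d 0 A" "okoff p d (s A) JH" "okoff p d (s A + s JH) Rh"
    using ok[OF hm] unfolding sh by (auto simp: okoff_append s_def add.assoc)
  have oki: "okoff p d 0 Li" "okoff p d (s Li) JI" "okoff p d (s Li + s JI) B"
    using ok[OF im] unfolding si by (auto simp: okoff_append s_def add.assoc)
  have newh: "okoff p d 0 (\<sigma>' h)"
  proof -
    have a: "okoff p d (s A) (filter (\<lambda>k. k \<notin> H') JH)" by (rule okoff_filter[OF okh(2)])
    have b: "okoff p d (s A + s (filter (\<lambda>k. k \<notin> H') JH)) (filter (\<lambda>k. k \<in> I') JI)"
    proof (rule okoff_bound)
      fix x assume x: "x \<in> set (filter (\<lambda>k. k \<in> I') JI)"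
      have "int (s A + s (filter (\<lambda>k. k \<notin> H') JH) + sum_list (map p (filter (\<lambda>k. k \<in> I') JI)))
          = int (s Lh)" using PH PI PP_eq splH sLh unfolding s_def by simp
      also have "\<dots> \<le> d x" using djs dJI[of x] x by auto
      finally show "int (s A + s (filter (\<lambda>k. k \<notin> H') JH) + sum_list (map p (filter (\<lambda>k. k \<in> I') JI))) \<le> d x" .
    qed
    have c: "s A + s (filter (\<lambda>k. k \<notin> H') JH) + s (filter (\<lambda>k. k \<in> I') JI) = s A + s JH"
      using PH PI PP_eq splH by simp
    show ?thesis unfolding s'h using okh(1) a b okh(3) c
      by (simp add: okoff_append s_def add.assoc)
  qed
  have newi: "okoff p d 0 (\<sigma>' i)"
  proof -
    have PHle: "PP p H' \<le> 2 * M" using PH splH sJH by linarith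
    have a: "okoff p d (s Li) (filter (\<lambda>k. k \<in> H') JH)"
    proof (rule okoff_bound)
      fix x assume x: "x \<in> set (filter (\<lambda>k. k \<in> H') JH)"
      have "int (s Li + sum_list (map p (filter (\<lambda>k. k \<in> H') JH))) \<le> int (s A)"
        using PH[unfolded s_def] PHle Del2 sLh sJH by simp
      also have "\<dots> \<le> d x" using okoff_mem[OF okh(2)] x by auto
      finally show "int (s Li + sum_list (map p (filter (\<lambda>k. k \<in> H') JH))) \<le> d x" .
    qed
    have b: "okoff p d (s Li + PP p H') (filter (\<lambda>k. k \<notin> I') JI)"
    proof (rule okoff_bound)
      fix x assume x: "x \<in> set (filter (\<lambda>k. k \<notin> I') JI)"
      have "int (s Li + PP p H' + sum_list (map p (filter (\<lambda>k. k \<notin> I') JI))) \<le> int (s Lh)"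
        using splI[unfolded s_def] PHle Del2 sJI unfolding s_def by simp
      also have "\<dots> \<le> d x" using djs dJI[of x] x by auto
      finally show "int (s Li + PP p H' + sum_list (map p (filter (\<lambda>k. k \<notin> I') JI))) \<le> d x" .
    qed
    have c: "s Li + PP p H' + s (filter (\<lambda>k. k \<notin> I') JI) = s Li + s JI"
      using PI PP_eq splI by simp
    show ?thesis unfolding s'i using oki(1) a b oki(3) c PH
      by (simp add: okoff_append s_def add.assoc)
  qed
  have "on_time m p d \<sigma>'"
    unfolding on_time_okoff
  proof (intro allI impI)
    fix g assume "g < m"
    then show "okoff p d 0 (\<sigma>' g)"
      using newh newi ok s'g by (cases "g = h"; cases "g = i") auto
  qed
  then show ?thesis using sched by (simp add: \<sigma>'_def)
qed

theorem lemma8: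
  fixes n m :: nat and p :: "nat \<Rightarrow> nat" and w :: "nat \<Rightarrow> nat" and d :: "nat \<Rightarrow> int"
    and S :: "nat set" and \<sigma> :: schedule and js h i :: nat and H' I' :: "nat set"
  assumes m_pos: "m \<ge> 1"
    and p_pos: "\<forall>j\<in>{1..n}. p j > 0"
    and d_sorted: "\<forall>j\<in>{1..n}. \<forall>k\<in>{1..n}. j \<le> k \<longrightarrow> d j \<le> d k"
    and S_sub: "S \<subseteq> {1..n}"
    and proper: "proper m \<sigma> S"
    and feasible: "on_time m p d \<sigma>"
    and adm: "admissible m p (Max (p ` {1..n})) \<sigma> js h i"
    and H'_sub: "H' \<subseteq> set (JH_list (Max (p ` {1..n})) \<sigma> js h)" and H'_ne: "H' \<noteq> {}"
    and I'_sub: "I' \<subseteq> set (JI_list (Max (p ` {1..n})) \<sigma> js i)"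
    and PP_eq: "PP p H' = PP p I'"
  shows "schedules m (swap_sched (Max (p ` {1..n})) \<sigma> js h i H' I') S
       \<and> on_time m p d (swap_sched (Max (p ` {1..n})) \<sigma> js h i H' I')
       \<and> cost n m w (swap_sched (Max (p ` {1..n})) \<sigma> js h i H' I') \<le> cost n m w \<sigma>"
  proof -
  let ?pm = "Max (p ` {1..n})"
  let ?s' = "swap_sched ?pm \<sigma> js h i H' I'"
  have hm: "h < m" and im: "i < m" and jsh: "js \<in> set (\<sigma> h)"
    and Del: "Delta p \<sigma> h i js \<ge> 4 * int ?pm ^ 2"
    using adm by (auto simp: admissible_def)
  have sc: "set (concat (map \<sigma> [0..<m])) = S" using proper by (simp add: proper_def schedules_def)
  have pb: "\<forall>x\<in>S. p x \<le> ?pm" using S_sub by (auto intro: Max_ge)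
  have jsS: "js \<in> S" using jsh hm sc by auto
  have hi: "h \<noteq> i"
  proof
    assume "h = i"
    then have "4 * int ?pm ^ 2 \<le> 0" using Del by (simp add: Delta_def)
    then have "?pm = 0" by simp
    moreover have "p js > 0" using p_pos jsS S_sub by auto
    ultimately show False using pb jsS by fastforce
  qed
  have ds: "\<forall>x\<in>S. \<forall>y\<in>S. x \<le> y \<longrightarrow> d x \<le> d y" using d_sorted S_sub by blast
  have r: "schedules m ?s' S \<and> on_time m p d ?s'"
    by (rule main[OF proper feasible hm im hi jsh Del H'_sub I'_sub PP_eq pb ds])
  then have "set (concat (map ?s' [0..<m])) = S" by (simp add: schedules_def)
  then have "cost n m w ?s' = cost n m w \<sigma>" using sc by (simp add: cost_def)
  then show ?thesis using r by simp
qed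

end
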